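(* Let $X$ be an infinite set and let $w_1, w_2, \ldots \in \{a,b\}^+$ be such that no non-empty proper prefix of any $w_n$ is a suffix of any $w_m$ ($m,n\in\mathbb{N}$), and $w_n$ is not a subword of $w_m$ whenever $m \neq n$. Then $(w_1, w_2, \ldots)$ is a universal sequence for $X^X$.
   Context: $\{a,b\}^+$ is the free semigroup of non-empty words over $\{a,b\}$. $X^X$ is the full transformation monoid of all functions $X\to X$ under composition. A sequence $w_1, w_2, \ldots \in \{a,b\}^+$ is universal for a semigroup $T$ if for every sequence $f_1, f_2, \ldots \in T$ there is a semigroup homomorphism $\Phi: \{a,b\}^+ \to T$ with $(w_n)\Phi = f_n$ for all $n$. *)

theory Defs
  imports Main "HOL-Library.Sublist"
begin

text \<open>The two-letter alphabet; non-empty lists over it model the free semigroup.\<close>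
datatype letter = A | B

text \<open>Following the paper, maps act on the right, so the product
f g in X^X means "first f, then g", i.e. the function g \<circ> f.\<close>
definition semigroup_hom :: "(letter list \<Rightarrow> ('x \<Rightarrow> 'x)) \<Rightarrow> bool" where
  "semigroup_hom \<Phi> \<longleftrightarrow>
     (\<forall>u v. u \<noteq> [] \<longrightarrow> v \<noteq> [] \<longrightarrow> \<Phi> (u @ v) = \<Phi> v \<circ> \<Phi> u)"

definition universal_seq :: "(nat \<Rightarrow> letter list) \<Rightarrow> ('x itself) \<Rightarrow> bool" where
  "universal_seq w TYPE('x) \<longleftrightarrow>
     (\<forall>f :: nat \<Rightarrow> ('x \<Rightarrow> 'x). \<exists>\<Phi>. semigroup_hom \<Phi> \<and> (\<forall>n. \<Phi> (w n) = f n))"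

end

theory Submission
  imports Defs "HOL-Library.Countable" "HOL-Library.Countable_Set_Type"
begin

unbundle cardinal_syntax

lemma letter_list_countable: "countable (UNIV :: letter list set)"
proof -
  have "inj (map (\<lambda>c. c = A))"
  proof (rule injI)
    fix xs ys :: "letter list" assume "map (\<lambda>c. c = A) xs = map (\<lambda>c. c = A) ys"
    moreover have "inj (\<lambda>c::letter. c = A)" by (rule injI) (metis letter.exhaust)
    ultimately show "xs = ys" by (simp add: inj_map_eq_map)
  qed
  then have "inj (to_nat \<circ> map (\<lambda>c. c = A))" by (simp add: inj_compose)
  then show ?thesis unfolding countable_def by blast
qed

definition stp :: "(nat \<Rightarrow> letter list) \<Rightarrow> (nat \<Rightarrow> 'a \<times> letter list \<Rightarrow> 'a \<times> letter list)
   \<Rightarrow> 'a \<times> letter list \<Rightarrow> letter \<Rightarrow> 'a \<times> letter list" where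
  "stp w F p c = (let u = snd p @ [c] in
     if \<exists>n. suffix (w n) u
     then (let n = SOME n. suffix (w n) u in F n (fst p, take (length u - length (w n)) u))
     else (fst p, u))"

definition run where "run w F p u = foldl (stp w F) p u"

lemma no_suffix:
  assumes "\<forall>m n u. u \<noteq> [] \<and> strict_prefix u (w n) \<longrightarrow> \<not> suffix u (w m)"
    and "\<forall>m n. m \<noteq> n \<longrightarrow> \<not> sublist (w n) (w m)"
    and "p \<noteq> []" and "strict_prefix p (w n)"
  shows "\<not> suffix (w m) (v @ p)"
proof
  assume "suffix (w m) (v @ p)"
  then have "suffix (w m) p \<or> (\<exists>s. w m = s @ p)"
    by (auto simp: suffix_append)
  then show False
  proof
    assume h: "suffix (w m) p"
    then have "sublist (w m) (w n)"
    proof -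
      have "prefix p (w n)" using assms(4) by (simp add: strict_prefix_def)
      then show ?thesis using h
        by (meson prefix_imp_sublist suffix_imp_sublist sublist_order.order_trans)
    qed
    moreover have mn: "m \<noteq> n"
    proof -
      have "length (w m) \<le> length p" using h by (auto simp: suffix_def)
      moreover have "length p < length (w n)" by (rule prefix_length_less[OF assms(4)])
      ultimately show ?thesis by auto
    qed
    ultimately show False using assms(2)[rule_format, OF mn[symmetric]] by simp
  next
    assume "\<exists>s. w m = s @ p"
    then have "suffix p (w m)" by (auto simp: suffix_def)
    then show False using assms(1,3,4) by blast
  qed
qed

lemma run_prefix:
  assumes "\<forall>m n u. u \<noteq> [] \<and> strict_prefix u (w n) \<longrightarrow> \<not> suffix u (w m)"
    and "\<forall>m n. m \<noteq> n \<longrightarrow> \<not> sublist (w n) (w m)"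
  shows "k < length (w n) \<Longrightarrow> run w F (x, v) (take k (w n)) = (x, v @ take k (w n))"
proof (induction k)
  case 0
  then show ?case by (simp add: run_def)
next
  case (Suc k)
  have t: "take (Suc k) (w n) = take k (w n) @ [w n ! k]"
    using Suc.prems by (simp add: take_Suc_conv_app_nth)
  have "\<And>m. \<not> suffix (w m) (v @ take (Suc k) (w n))"
    apply (rule no_suffix[OF assms, where n=n])
    using Suc.prems by (auto simp: strict_prefix_def take_is_prefix)
  then show ?case using Suc by (simp add: run_def t stp_def Let_def)
qed

lemma run_full:
  assumes "\<forall>n. w n \<noteq> []"
    and "\<forall>m n u. u \<noteq> [] \<and> strict_prefix u (w n) \<longrightarrow> \<not> suffix u (w m)"
    and "\<forall>m n. m \<noteq> n \<longrightarrow> \<not> sublist (w n) (w m)"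
  shows "run w F (x, v) (w n) = F n (x, v)"
proof -
  define k where "k = length (w n) - 1"
  have k: "k < length (w n)" "Suc k = length (w n)" using assms(1) by (auto simp: k_def)
  have wn: "w n = take k (w n) @ [w n ! k]"
    using k by (metis take_Suc_conv_app_nth take_all order_refl)
  have r: "run w F (x, v) (take k (w n)) = (x, v @ take k (w n))"
    using run_prefix[OF assms(2,3) k(1)] .
  define u where "u = v @ take k (w n) @ [w n ! k]"
  have u: "u = v @ w n" using wn u_def by simp
  have ex: "\<exists>n'. suffix (w n') u" unfolding u suffix_def by blast
  have sm: "(SOME n'. suffix (w n') u) = n"
  proof (rule some_equality)
    show "suffix (w n) u" unfolding u suffix_def by blast
  next
    fix n' assume h: "suffix (w n') u"
    have "suffix (w n) u" unfolding u suffix_def by blast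
    with h have "suffix (w n') (w n) \<or> suffix (w n) (w n')"
      by (rule suffix_same_cases)
    then have "sublist (w n') (w n) \<or> sublist (w n) (w n')"
      by (auto intro: suffix_imp_sublist)
    then show "n' = n"
    proof (rule contrapos_pp)
      assume "n' \<noteq> n"
      then show "\<not> (sublist (w n') (w n) \<or> sublist (w n) (w n'))"
        using assms(3)[rule_format, of n' n] assms(3)[rule_format, of n n'] by auto
    qed
  qed
  have "run w F (x, v) (w n) = stp w F (x, v @ take k (w n)) (w n ! k)"
    using r by (subst wn) (simp add: run_def)
  also have "\<dots> = F n (x, v)"
  proof -
    have e: "snd (x, v @ take k (w n)) @ [w n ! k] = v @ w n"
      using wn by (metis append_assoc snd_conv)
    show ?thesis
      unfolding stp_def Let_def e using ex sm by (simp add: u)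
  qed
  finally show ?thesis .
qed

theorem corollary3p3:
  fixes w :: "nat \<Rightarrow> letter list"
  assumes "infinite (UNIV :: 'x set)"
    and "\<forall>n. w n \<noteq> []"
    and "\<forall>m n u. u \<noteq> [] \<and> strict_prefix u (w n) \<longrightarrow> \<not> suffix u (w m)"
    and "\<forall>m n. m \<noteq> n \<longrightarrow> \<not> sublist (w n) (w m)"
  shows "universal_seq w TYPE('x)"
proof -
  have c1: "|UNIV :: letter list set| \<le>o |UNIV :: nat set|"
    using countable_card_of_nat[of "UNIV :: letter list set"] letter_list_countable by simp
  have c2: "|UNIV :: nat set| \<le>o |UNIV :: 'x set|"
    using assms(1) infinite_iff_card_of_nat by blast
  have "|(UNIV :: 'x set) \<times> (UNIV :: letter list set)| =o |UNIV :: 'x set|"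
    using card_of_Times_infinite[OF assms(1), of "UNIV :: letter list set"]
      ordLeq_transitive[OF c1 c2] by auto
  then obtain h0 where "bij_betw h0 ((UNIV :: 'x set) \<times> (UNIV :: letter list set)) (UNIV :: 'x set)"
    using card_of_ordIso by blast
  then have "bij_betw (inv h0) (UNIV :: 'x set) (UNIV :: ('x \<times> letter list) set)"
    by (simp add: bij_betw_inv_into)
  then obtain h :: "'x \<Rightarrow> 'x \<times> letter list" where hb: "bij h" by blast
  show ?thesis unfolding universal_seq_def
  proof
    fix f :: "nat \<Rightarrow> 'x \<Rightarrow> 'x"
    define F where "F = (\<lambda>n p. h (f n (inv h p)))"
    define \<Phi> where "\<Phi> = (\<lambda>u x. inv h (run w F (h x) u))"
    have hi: "\<And>y. h (inv h y) = y" using hb by (simp add: bij_is_surj surj_f_inv_f)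
    have ih: "\<And>x. inv h (h x) = x" using hb by (simp add: bij_is_inj)
    have "semigroup_hom \<Phi>"
      unfolding semigroup_hom_def \<Phi>_def run_def by (auto simp: hi)
    moreover have "\<forall>n. \<Phi> (w n) = f n"
    proof
      fix n
      show "\<Phi> (w n) = f n"
      proof
        fix x
        obtain a v where hx: "h x = (a, v)" by fastforce
        show "\<Phi> (w n) x = f n x"
          unfolding \<Phi>_def hx run_full[OF assms(2-4)]
          by (simp add: F_def ih hx[symmetric])
      qed
    qed
    ultimately show "\<exists>\<Phi>. semigroup_hom \<Phi> \<and> (\<forall>n. \<Phi> (w n) = f n)" by blast
  qed
qed

end
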